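(* Let $\mathcal{M}=(E,\rho)$ be a $q$-matroid and $\mathcal{Z}(\mathcal{M})$ its set of cyclic flats. Then $(\mathcal{Z}(\mathcal{M}),\le)$ is a lattice with meet and join $Z_1\wedge Z_2=\mathrm{cyc}(Z_1\cap Z_2)$ and $Z_1\vee Z_2=\mathrm{cl}(Z_1+Z_2)$. Moreover $\rho(Z_1\wedge Z_2)=\rho(Z_1\cap Z_2)-\dim\big((Z_1\cap Z_2)/(Z_1\wedge Z_2)\big)$ and $\rho(Z_1\vee Z_2)=\rho(Z_1+Z_2)$, and consequently \[ \rho(Z_1)+\rho(Z_2)\ge\rho(Z_1\vee Z_2)+\rho(Z_1\wedge Z_2)+\dim\big((Z_1\cap Z_2)/(Z_1\wedge Z_2)\big) \] for all $Z_1,Z_2\in\mathcal{Z}(\mathcal{M})$.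
   Context: Let $\mathbb{F}=\mathbb{F}_q$. A $q$-matroid is $\mathcal{M}=(E,\rho)$, $E$ a finite-dimensional $\mathbb{F}$-vector space, $\rho$ from subspaces to $\mathbb{Z}_{\ge0}$ with $0\le\rho(V)\le\dim V$, monotone and submodular. Flat: $\rho(F+\langle x\rangle)>\rho(F)$ for all $x\notin F$. Closure: $\mathrm{cl}(V)=\sum\{\langle x\rangle:\rho(V+\langle x\rangle)=\rho(V)\}$. Cyclic core: $\mathrm{cyc}(V)=\{x\in V\mid\rho(W)=\rho(V)\text{ for all }W\le V\text{ with }W+\langle x\rangle=V\}$; $V$ is cyclic if $\mathrm{cyc}(V)=V$. A cyclic flat is a subspace that is both a flat and cyclic. *)

theory Defs
  imports Complex_Main
begin

text \<open>Subspaces are sets of vectors; the sum of subspaces V + W is span (V \<union> W),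
  and the span of x is span {x}.\<close>

definition subspaces_of :: "('f::field \<Rightarrow> 'v::ab_group_add \<Rightarrow> 'v) \<Rightarrow> 'v set \<Rightarrow> 'v set set" where
  "subspaces_of scale E = {V. module.subspace scale V \<and> V \<subseteq> E}"

definition ssum :: "('f::field \<Rightarrow> 'v::ab_group_add \<Rightarrow> 'v) \<Rightarrow> 'v set \<Rightarrow> 'v set \<Rightarrow> 'v set" where
  "ssum scale V W = module.span scale (V \<union> W)"

definition qmatroid :: "('f::field \<Rightarrow> 'v::ab_group_add \<Rightarrow> 'v) \<Rightarrow> 'v set \<Rightarrow> ('v set \<Rightarrow> nat) \<Rightarrow> bool" where
  "qmatroid scale E rho \<longleftrightarrow>
     vector_space scale \<and> finite (UNIV :: 'f set) \<and>
     module.subspace scale E \<and>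
     (\<exists>B. finite B \<and> B \<subseteq> E \<and> module.span scale B = E) \<and>
     (\<forall>V\<in>subspaces_of scale E. rho V \<le> vector_space.dim scale V) \<and>
     (\<forall>V\<in>subspaces_of scale E. \<forall>W\<in>subspaces_of scale E. V \<subseteq> W \<longrightarrow> rho V \<le> rho W) \<and>
     (\<forall>V\<in>subspaces_of scale E. \<forall>W\<in>subspaces_of scale E.
        rho (ssum scale V W) + rho (V \<inter> W) \<le> rho V + rho W)"

definition is_flat :: "('f::field \<Rightarrow> 'v::ab_group_add \<Rightarrow> 'v) \<Rightarrow> 'v set \<Rightarrow> ('v set \<Rightarrow> nat) \<Rightarrow> 'v set \<Rightarrow> bool" where
  "is_flat scale E rho F \<longleftrightarrow> F \<in> subspaces_of scale E \<and>
     (\<forall>x \<in> E - F. rho (ssum scale F (module.span scale {x})) > rho F)"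

definition qcl :: "('f::field \<Rightarrow> 'v::ab_group_add \<Rightarrow> 'v) \<Rightarrow> 'v set \<Rightarrow> ('v set \<Rightarrow> nat) \<Rightarrow> 'v set \<Rightarrow> 'v set" where
  "qcl scale E rho V = module.span scale
     (\<Union>{module.span scale {x} | x. x \<in> E \<and> rho (ssum scale V (module.span scale {x})) = rho V})"

definition qcyc :: "('f::field \<Rightarrow> 'v::ab_group_add \<Rightarrow> 'v) \<Rightarrow> ('v set \<Rightarrow> nat) \<Rightarrow> 'v set \<Rightarrow> 'v set" where
  "qcyc scale rho V = {x \<in> V. \<forall>W. module.subspace scale W \<and> W \<subseteq> V \<and>
       ssum scale W (module.span scale {x}) = V \<longrightarrow> rho W = rho V}"

definition is_cyclic :: "('f::field \<Rightarrow> 'v::ab_group_add \<Rightarrow> 'v) \<Rightarrow> ('v set \<Rightarrow> nat) \<Rightarrow> 'v set \<Rightarrow> bool" where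
  "is_cyclic scale rho V \<longleftrightarrow> qcyc scale rho V = V"

definition cyclic_flats :: "('f::field \<Rightarrow> 'v::ab_group_add \<Rightarrow> 'v) \<Rightarrow> 'v set \<Rightarrow> ('v set \<Rightarrow> nat) \<Rightarrow> 'v set set" where
  "cyclic_flats scale E rho = {Z. is_flat scale E rho Z \<and> is_cyclic scale rho Z}"

end

theory Submission
  imports Defs
begin


locale qm = vector_space scale for scale :: "'f::field \<Rightarrow> 'v::ab_group_add \<Rightarrow> 'v" (infixr "*s" 75) +
  fixes E :: "'v set" and rho :: "'v set \<Rightarrow> nat"
  assumes M: "qmatroid scale E rho"
begin

abbreviation sub where "sub V \<equiv> subspace V \<and> V \<subseteq> E"

lemma span_sub_eq[simp]: "subspace V \<Longrightarrow> span V = V"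
  by (simp add: span_eq_iff)

lemma sE: "subspace E" using M by (simp add: qmatroid_def)

lemma finE: "\<exists>B. finite B \<and> B \<subseteq> E \<and> span B = E" using M by (simp add: qmatroid_def)

lemma rho_dim: "sub V \<Longrightarrow> rho V \<le> dim V"
  using M by (simp add: qmatroid_def subspaces_of_def)

lemma rho_mono: "sub V \<Longrightarrow> sub W \<Longrightarrow> V \<subseteq> W \<Longrightarrow> rho V \<le> rho W"
  using M by (simp add: qmatroid_def subspaces_of_def)

lemma rho_submod: "sub V \<Longrightarrow> sub W \<Longrightarrow> rho (span (V \<union> W)) + rho (V \<inter> W) \<le> rho V + rho W"
  using M by (simp add: qmatroid_def subspaces_of_def ssum_def)

lemma sub_span: "S \<subseteq> E \<Longrightarrow> sub (span S)"
  using sE span_minimal by blast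

lemma sub_Un: "sub V \<Longrightarrow> sub W \<Longrightarrow> sub (span (V \<union> W))"
  by (simp add: sub_span)

lemma sub_ins: "sub V \<Longrightarrow> x \<in> E \<Longrightarrow> sub (span (insert x V))"
  by (simp add: sub_span)

lemma sub_Int: "sub V \<Longrightarrow> sub W \<Longrightarrow> sub (V \<inter> W)"
  by (auto simp: subspace_inter)

lemma span_Un_span: "span (A \<union> span B) = span (A \<union> B)"
proof -
  have "A \<union> span B \<subseteq> span (A \<union> B)"
    using span_mono[of B "A \<union> B"] span_superset[of "A \<union> B"] by blast
  moreover have "A \<union> B \<subseteq> span (A \<union> span B)"
    using span_superset[of "A \<union> span B"] span_superset[of B] by blast
  ultimately show ?thesis unfolding span_eq by blast
qed

lemma ssum_single: "span (V \<union> span {x}) = span (insert x V)"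
  by (simp add: span_Un_span)

lemma ssum_single': "ssum scale V (span {x}) = span (insert x V)"
  by (simp add: ssum_def ssum_single)

lemma span_ins_sub: "subspace V \<Longrightarrow> x \<in> V \<Longrightarrow> span (insert x V) = V"
  by (metis span_redundant span_base span_eq_iff)

lemma rho_unit: "sub V \<Longrightarrow> x \<in> E \<Longrightarrow> rho (span (insert x V)) \<le> rho V + 1"
proof -
  assume V: "sub V" and x: "x \<in> E"
  have sx: "sub (span {x})" using x by (simp add: sub_span)
  have "rho (span {x}) \<le> dim (span {x})" using rho_dim sx by blast
  also have "\<dots> \<le> 1" using dim_le_card'[of "{x}"] by simp
  finally have "rho (span {x}) \<le> 1" .
  moreover have "rho (span (V \<union> span {x})) + rho (V \<inter> span {x}) \<le> rho V + rho (span {x})"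
    using rho_submod V sx by blast
  ultimately show ?thesis using ssum_single by simp
qed

lemma rho_add_set: assumes A: "sub A" shows "finite T \<Longrightarrow> T \<subseteq> E \<Longrightarrow> rho (span (A \<union> T)) \<le> rho A + card T"
proof (induction T rule: finite_induct)
  case empty
  then show ?case using A by simp
next
  case (insert t T)
  have "span (A \<union> insert t T) = span (insert t (span (A \<union> T)))"
    using span_Un_span[of "{t}" "A \<union> T"] by (simp add: Un_commute)
  moreover have "rho (span (insert t (span (A \<union> T)))) \<le> rho (span (A \<union> T)) + 1"
  proof (rule rho_unit)
    show "sub (span (A \<union> T))" using insert A by (intro sub_span) auto
  qed (use insert in auto)
  ultimately show ?case using insert by simp
qed

end

context qm begin

lemma fin_indep: "independent S \<Longrightarrow> S \<subseteq> E \<Longrightarrow> finite S"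
  using finE independent_span_bound by blast

lemma basis_of: assumes "sub V"
  obtains B where "B \<subseteq> V" "independent B" "span B = V" "finite B" "card B = dim V"
proof -
  obtain B where B: "B \<subseteq> V" "independent B" "V \<subseteq> span B" "card B = dim V"
    using basis_exists by blast
  have "span B = V" using B assms span_minimal[of B V] span_superset by blast
  moreover have "finite B" using B assms fin_indep by blast
  ultimately show ?thesis using B that by blast
qed

lemma extend: assumes A: "sub A" and V: "sub V" and AV: "A \<subseteq> V"
  obtains T where "finite T" "T \<subseteq> V" "span (A \<union> T) = V" "card T + dim A = dim V"
proof -
  obtain BA where BA: "BA \<subseteq> A" "independent BA" "span BA = A" "finite BA" "card BA = dim A"
    using basis_of A by blast
  obtain BV where BV: "BA \<subseteq> BV" "BV \<subseteq> V" "independent BV" "V \<subseteq> span BV"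
    using maximal_independent_subset_extend[of BA V] BA AV by blast
  have fBV: "finite BV" using BV V fin_indep by blast
  have cV: "card BV = dim V" using BV basis_card_eq_dim by blast
  define T where "T = BV - BA"
  have "card T = card BV - card BA" unfolding T_def using BV(1) fBV card_Diff_subset
    by (metis BA(4))
  moreover have "card BA \<le> card BV" using BV(1) fBV card_mono by blast
  ultimately have c: "card T + dim A = dim V" using BA cV by simp
  have "span (A \<union> T) \<subseteq> V" using AV BV V T_def span_minimal[of "A \<union> T" V] by auto
  moreover have "V \<subseteq> span (A \<union> T)"
  proof -
    have "BV \<subseteq> A \<union> T" using BA T_def by auto
    then show ?thesis using BV(4) span_mono by blast
  qed
  ultimately show ?thesis using that[of T] fBV T_def BV c by auto
qed

lemma dim_mono': "sub A \<Longrightarrow> sub V \<Longrightarrow> A \<subseteq> V \<Longrightarrow> dim A \<le> dim V"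
  by (metis extend le_add2)

lemma dim_ins: assumes S: "sub S" and x: "x \<in> E" "x \<notin> S"
  shows "dim (span (insert x S)) = dim S + 1"
proof -
  obtain B where B: "B \<subseteq> S" "independent B" "span B = S" "finite B" "card B = dim S"
    using basis_of S by blast
  have "independent (insert x B)" using B x independent_insertI by auto
  moreover have "span (insert x B) = span (insert x S)"
    using B span_Un_span[of "{x}" B] span_Un_span[of "{x}" S] S by simp
  ultimately have "dim (span (insert x S)) = card (insert x B)"
    by (metis dim_eq_card dim_span)
  also have "\<dots> = dim S + 1"
  proof -
    have "x \<notin> B" using B x by auto
    then show ?thesis using B by simp
  qed
  finally show ?thesis .
qed

lemma rho_le_ext: assumes "sub A" "sub V" "A \<subseteq> V"
  shows "rho V \<le> rho A + (dim V - dim A)"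
proof -
  obtain T where T: "finite T" "T \<subseteq> V" "span (A \<union> T) = V" "card T + dim A = dim V"
    using extend assms by blast
  have "rho (span (A \<union> T)) \<le> rho A + card T" using rho_add_set assms T by blast
  then show ?thesis using T by simp
qed

end

context qm begin

lemma modular: assumes W: "subspace W" and Z: "subspace Z" and ZW: "Z \<subseteq> span (insert z W)"
  and z: "z \<in> Z"
  shows "span (insert z (Z \<inter> W)) = Z"
proof
  show "span (insert z (Z \<inter> W)) \<subseteq> Z" using z Z span_minimal[of "insert z (Z \<inter> W)" Z] by auto
  show "Z \<subseteq> span (insert z (Z \<inter> W))"
  proof
    fix a assume a: "a \<in> Z"
    then obtain k where k: "a - k *s z \<in> W" using ZW span_breakdown_eq[of a z W] W by auto
    have "a - k *s z \<in> Z" using a z Z by (simp add: subspace_diff subspace_scale)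
    then have "a - k *s z \<in> span (Z \<inter> W)" using k span_base by blast
    then show "a \<in> span (insert z (Z \<inter> W))" using span_breakdown_eq by blast
  qed
qed

lemma exchange: assumes W: "subspace W" and y: "y \<in> span (insert x W)" "y \<notin> W"
  shows "span (insert y W) = span (insert x W)"
proof -
  obtain k where k: "y - k *s x \<in> W" using y span_breakdown_eq[of y x W] W by auto
  have k0: "k \<noteq> 0" using k y by auto
  have "x - inverse k *s y = - (inverse k *s (y - k *s x))"
    using k0 by (simp add: scale_right_diff_distrib)
  also have "\<dots> \<in> W" using k W by (simp add: subspace_neg subspace_scale)
  finally have "x - inverse k *s y \<in> span W" using W by simp
  then have x: "x \<in> span (insert y W)" using span_breakdown_eq by blast
  have "span (insert x W) \<subseteq> span (insert y W)"
    using x span_minimal[of "insert x W" "span (insert y W)"] span_superset[of "insert y W"] by auto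
  moreover have "span (insert y W) \<subseteq> span (insert x W)"
    using y span_minimal[of "insert y W" "span (insert x W)"] span_superset[of "insert x W"] by auto
  ultimately show ?thesis by blast
qed

definition SV where "SV V = {x \<in> E. rho (span (insert x V)) = rho V}"

lemma cl_eq: "qcl scale E rho V = span (SV V)"
proof -
  have e: "\<Union>{span {x} | x. x \<in> E \<and> rho (ssum scale V (span {x})) = rho V} = \<Union>{span {x} | x. x \<in> SV V}"
    by (simp add: SV_def ssum_single')
  have "span (\<Union>{span {x} | x. x \<in> SV V}) = span (SV V)"
  proof -
    have "\<Union>{span {x} | x. x \<in> SV V} \<subseteq> span (SV V)"
      using span_mono[of "{_}" "SV V"] by blast
    moreover have "SV V \<subseteq> span (\<Union>{span {x} | x. x \<in> SV V})"
    proof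
      fix x assume x: "x \<in> SV V"
      have "span {x} \<in> {span {x} | x. x \<in> SV V}" using x by blast
      moreover have "x \<in> span {x}" by (rule span_base) simp
      ultimately have "x \<in> \<Union>{span {x} | x. x \<in> SV V}" by blast
      then show "x \<in> span (\<Union>{span {x} | x. x \<in> SV V})" by (rule span_base)
    qed
    ultimately show ?thesis unfolding span_eq by blast
  qed
  then show ?thesis unfolding qcl_def e .
qed

lemma SV_E: "SV V \<subseteq> E" by (auto simp: SV_def)

lemma cl_sub: "sub (qcl scale E rho V)" unfolding cl_eq using SV_E sub_span by blast

lemma V_cl: assumes "sub V" shows "V \<subseteq> qcl scale E rho V"
proof -
  have "V \<subseteq> SV V" using assms span_ins_sub by (auto simp: SV_def)
  then show ?thesis unfolding cl_eq using span_superset by blast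
qed

lemma rho_SV_fin: assumes V: "sub V" shows "finite T \<Longrightarrow> T \<subseteq> SV V \<Longrightarrow> rho (span (V \<union> T)) = rho V"
proof (induction T rule: finite_induct)
  case empty
  then show ?case using V by simp
next
  case (insert t T)
  define X where "X = span (V \<union> T)"
  define Y where "Y = span (insert t V)"
  have tE: "t \<in> E" "T \<subseteq> E" using insert SV_E by auto
  have sX: "sub X" unfolding X_def using V tE by (intro sub_span) auto
  have sY: "sub Y" unfolding Y_def using V tE by (intro sub_span) auto
  have rX: "rho X = rho V" using insert X_def by auto
  have rY: "rho Y = rho V" using insert Y_def by (auto simp: SV_def)
  have VXY: "V \<subseteq> X \<inter> Y" unfolding X_def Y_def using span_superset by blast
  have a: "rho V \<le> rho (X \<inter> Y)" using rho_mono VXY V sX sY sub_Int by blast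
  have b: "rho (span (X \<union> Y)) + rho (X \<inter> Y) \<le> rho X + rho Y" using rho_submod sX sY by blast
  have c: "span (X \<union> Y) = span (V \<union> insert t T)"
  proof -
    have "span (X \<union> Y) = span (V \<union> T \<union> insert t V)"
      unfolding X_def Y_def using span_Un_span[of "span (V \<union> T)" "insert t V"] span_Un_span[of "insert t V" "V \<union> T"]
      by (simp add: Un_commute)
    also have "V \<union> T \<union> insert t V = V \<union> insert t T" by auto
    finally show ?thesis .
  qed
  have d: "rho V \<le> rho (span (V \<union> insert t T))"
  proof (rule rho_mono)
    show "sub (span (V \<union> insert t T))" using V tE by (intro sub_span) auto
    show "V \<subseteq> span (V \<union> insert t T)" using span_superset[of "V \<union> insert t T"] by blast
  qed (use V in auto)
  have "rho (span (V \<union> insert t T)) + rho (X \<inter> Y) \<le> rho V + rho V" using b c rX rY by simp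
  then show ?case using a d by linarith
qed

lemma rho_cl: assumes V: "sub V" shows "rho (qcl scale E rho V) = rho V"
proof -
  obtain B where B: "B \<subseteq> SV V" "independent B" "SV V \<subseteq> span B"
    using maximal_independent_subset by blast
  have fB: "finite B" using B SV_E fin_indep by blast
  have "span (V \<union> B) = span (SV V)"
  proof -
    have "V \<union> B \<subseteq> span (SV V)" using V_cl[OF V] B span_superset unfolding cl_eq by blast
    moreover have "SV V \<subseteq> span (V \<union> B)" using B span_mono[of B "V \<union> B"] by blast
    ultimately show ?thesis unfolding span_eq by blast
  qed
  then show ?thesis using rho_SV_fin[OF V fB B(1)] cl_eq by simp
qed

lemma flat_sub: "is_flat scale E rho F \<Longrightarrow> sub F"
  by (simp add: is_flat_def subspaces_of_def)

lemma cl_flat: assumes V: "sub V" shows "is_flat scale E rho (qcl scale E rho V)"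
proof -
  let ?C = "qcl scale E rho V"
  have "rho ?C < rho (span (insert y ?C))" if y: "y \<in> E" "y \<notin> ?C" for y
  proof (rule ccontr)
    assume "\<not> ?thesis"
    then have le: "rho (span (insert y ?C)) \<le> rho V" using rho_cl V by simp
    have "rho (span (insert y V)) \<le> rho (span (insert y ?C))"
    proof (rule rho_mono)
      show "sub (span (insert y V))" using V y by (intro sub_span) auto
      show "sub (span (insert y ?C))" using cl_sub y by (intro sub_span) auto
      show "span (insert y V) \<subseteq> span (insert y ?C)" using V_cl[OF V] by (intro span_mono) auto
    qed
    moreover have "rho V \<le> rho (span (insert y V))"
      using rho_mono V y sub_span[of "insert y V"] span_superset[of "insert y V"] by auto
    ultimately have "y \<in> SV V" using le y by (simp add: SV_def)
    then show False using y span_superset[of "SV V"] cl_eq by auto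
  qed
  then show ?thesis using cl_sub by (simp add: is_flat_def subspaces_of_def ssum_single')
qed

lemma flat_incr: assumes F: "is_flat scale E rho F" and A: "sub A" "A \<subseteq> F" and y: "y \<in> E" "y \<notin> F"
  shows "rho A < rho (span (insert y A))"
proof -
  have sF: "sub F" using F flat_sub by blast
  define Y where "Y = span (insert y A)"
  have sY: "sub Y" unfolding Y_def using A y sub_span by auto
  have "span (F \<union> Y) = span (insert y F)"
  proof -
    have "span (F \<union> Y) = span (F \<union> insert y A)" unfolding Y_def by (rule span_Un_span)
    also have "F \<union> insert y A = insert y F" using A by auto
    finally show ?thesis .
  qed
  then have "rho (span (insert y F)) + rho (F \<inter> Y) \<le> rho F + rho Y" using rho_submod[OF sF sY] by simp
  moreover have "rho A \<le> rho (F \<inter> Y)"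
    using rho_mono[of A "F \<inter> Y"] A sF sY sub_Int[of F Y] span_superset[of "insert y A"] Y_def by auto
  moreover have "rho F < rho (span (insert y F))" using F y by (simp add: is_flat_def ssum_single')
  ultimately show ?thesis unfolding Y_def by linarith
qed

lemma cl_least: assumes V: "sub V" and F: "is_flat scale E rho F" and VF: "V \<subseteq> F"
  shows "qcl scale E rho V \<subseteq> F"
proof -
  have sF: "sub F" using F flat_sub by blast
  have "SV V \<subseteq> F"
  proof
    fix x assume x: "x \<in> SV V"
    show "x \<in> F"
    proof (rule ccontr)
      assume nx: "x \<notin> F"
      have xE: "x \<in> E" using x SV_E by auto
      define Y where "Y = span (insert x V)"
      have sY: "sub Y" unfolding Y_def using V xE sub_span by auto
      have "span (F \<union> Y) = span (insert x F)"
      proof -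
        have "span (F \<union> Y) = span (F \<union> insert x V)" unfolding Y_def by (rule span_Un_span)
        also have "F \<union> insert x V = insert x F" using VF by auto
        finally show ?thesis .
      qed
      then have "rho (span (insert x F)) + rho (F \<inter> Y) \<le> rho F + rho Y" using rho_submod[OF sF sY] by simp
      moreover have "rho V \<le> rho (F \<inter> Y)"
        using rho_mono[of V "F \<inter> Y"] V VF sF sY sub_Int[of F Y] span_superset[of "insert x V"] Y_def by auto
      moreover have "rho Y = rho V" using x Y_def by (simp add: SV_def)
      moreover have "rho F < rho (span (insert x F))" using F xE nx by (simp add: is_flat_def ssum_single')
      ultimately show False by linarith
    qed
  qed
  then show ?thesis unfolding cl_eq using span_minimal sF by blast
qed

end

context qm begin

definition Loss where "Loss V = {W. subspace W \<and> W \<subseteq> V \<and> (\<exists>y. span (insert y W) = V) \<and> rho W < rho V}"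

lemma cyc_mem: "x \<in> qcyc scale rho V \<longleftrightarrow> x \<in> V \<and>
   (\<forall>W. subspace W \<and> W \<subseteq> V \<and> span (insert x W) = V \<longrightarrow> rho W = rho V)"
  by (simp add: qcyc_def ssum_single')

lemma cyc_eq: assumes V: "sub V" shows "qcyc scale rho V = V \<inter> \<Inter>(Loss V)"
proof
  show "qcyc scale rho V \<subseteq> V \<inter> \<Inter>(Loss V)"
  proof
    fix x assume x: "x \<in> qcyc scale rho V"
    have xV: "x \<in> V" using x cyc_mem by blast
    have "x \<in> W" if W: "W \<in> Loss V" for W
    proof (rule ccontr)
      assume nx: "x \<notin> W"
      obtain y where y: "span (insert y W) = V" using W Loss_def by blast
      have sW: "subspace W" "W \<subseteq> V" using W Loss_def by auto
      have "span (insert x W) = V" using exchange[OF sW(1), of x y] xV nx y by simp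
      then have "rho W = rho V" using x cyc_mem sW by blast
      then show False using W Loss_def by auto
    qed
    then show "x \<in> V \<inter> \<Inter>(Loss V)" using xV by blast
  qed
  show "V \<inter> \<Inter>(Loss V) \<subseteq> qcyc scale rho V"
  proof
    fix x assume x: "x \<in> V \<inter> \<Inter>(Loss V)"
    have "rho W = rho V" if W: "subspace W" "W \<subseteq> V" "span (insert x W) = V" for W
    proof (rule ccontr)
      assume ne: "rho W \<noteq> rho V"
      have "rho W \<le> rho V" using rho_mono W V by auto
      then have "W \<in> Loss V" using W ne Loss_def by auto
      then have "x \<in> W" using x by blast
      then have "W = V" using W span_ins_sub by auto
      then show False using ne by simp
    qed
    then show "x \<in> qcyc scale rho V" using x cyc_mem by blast
  qed
qed

lemma cyc_sub: assumes V: "sub V" shows "sub (qcyc scale rho V)" "qcyc scale rho V \<subseteq> V"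
proof -
  have "subspace (V \<inter> \<Inter>(Loss V))"
    using V by (intro subspace_inter subspace_Inter) (auto simp: Loss_def)
  then show "sub (qcyc scale rho V)" using cyc_eq V by auto
  show "qcyc scale rho V \<subseteq> V" using cyc_mem by blast
qed

lemma cyc_ind: assumes V: "sub V"
  shows "n \<le> dim V - dim (qcyc scale rho V) \<Longrightarrow> \<exists>A. sub A \<and> qcyc scale rho V \<subseteq> A \<and> A \<subseteq> V \<and> dim A + n = dim V \<and> rho A + n \<le> rho V"
proof (induction n)
  case 0
  then show ?case using V cyc_sub[OF V] by auto
next
  case (Suc n)
  let ?C = "qcyc scale rho V"
  obtain A where A: "sub A" "?C \<subseteq> A" "A \<subseteq> V" "dim A + n = dim V" "rho A + n \<le> rho V"
    using Suc by auto
  have "dim ?C < dim A" using Suc A by linarith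
  then obtain x where x: "x \<in> A" "x \<notin> ?C"
    using dim_mono'[of A ?C] A cyc_sub[OF V] by (meson not_le subsetI)
  have xV: "x \<in> V" using x A by auto
  then obtain W where W: "subspace W" "W \<subseteq> V" "span (insert x W) = V" "rho W \<noteq> rho V"
    using x cyc_mem by blast
  have sW: "sub W" using W V by auto
  have rW: "rho W < rho V" using W rho_mono[OF sW V] by auto
  have xW: "x \<notin> W"
  proof
    assume "x \<in> W"
    then have "W = V" using W span_ins_sub by auto
    then show False using W by simp
  qed
  have CW: "?C \<subseteq> W"
  proof -
    have "W \<in> Loss V" using W rW Loss_def by auto
    then show ?thesis using cyc_eq[OF V] by auto
  qed
  define A' where "A' = A \<inter> W"
  have sA': "sub A'" unfolding A'_def using A sW sub_Int by blast
  have AW: "span (A \<union> W) = V"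
  proof
    show "span (A \<union> W) \<subseteq> V" using A W V span_minimal[of "A \<union> W" V] by auto
    show "V \<subseteq> span (A \<union> W)" using W(3) x span_mono[of "insert x W" "A \<union> W"] by auto
  qed
  have "rho (span (A \<union> W)) + rho (A \<inter> W) \<le> rho A + rho W" using rho_submod A sW by blast
  then have "rho V + rho A' \<le> rho A + rho W" using AW A'_def by simp
  then have r: "rho A' + 1 \<le> rho A" using rW by linarith
  have "span (insert x A') = A" unfolding A'_def
    using modular[of W A x] W A x by auto
  moreover have "x \<in> E" "x \<notin> A'" using xV V xW A'_def by auto
  ultimately have d: "dim A = dim A' + 1" using dim_ins[OF sA'] by metis
  show ?case
  proof (intro exI conjI)
    show "subspace A'" "A' \<subseteq> E" using sA' by blast+
    show "?C \<subseteq> A'" using A CW A'_def by auto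
    show "A' \<subseteq> V" using A A'_def by auto
    show "dim A' + Suc n = dim V" using d A by simp
    show "rho A' + Suc n \<le> rho V" using r A by simp
  qed
qed

lemma cyc_rank: assumes V: "sub V"
  shows "rho (qcyc scale rho V) + (dim V - dim (qcyc scale rho V)) = rho V"
    "dim (qcyc scale rho V) \<le> dim V"
proof -
  let ?C = "qcyc scale rho V"
  show dC: "dim ?C \<le> dim V" using dim_mono' cyc_sub[OF V] V by blast
  obtain A where A: "sub A" "?C \<subseteq> A" "A \<subseteq> V" "dim A + (dim V - dim ?C) = dim V"
     "rho A + (dim V - dim ?C) \<le> rho V"
    using cyc_ind[OF V, of "dim V - dim ?C"] by auto
  have "rho ?C \<le> rho A" using rho_mono A cyc_sub[OF V] by blast
  moreover have "rho V \<le> rho ?C + (dim V - dim ?C)" using rho_le_ext cyc_sub[OF V] V by blast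
  ultimately show "rho ?C + (dim V - dim ?C) = rho V" using A by linarith
qed

end

context qm begin

lemma cyc_flat: assumes F: "is_flat scale E rho F" shows "is_flat scale E rho (qcyc scale rho F)"
proof -
  let ?C = "qcyc scale rho F"
  have sF: "sub F" using F flat_sub by blast
  have sC: "sub ?C" "?C \<subseteq> F" using cyc_sub[OF sF] by auto
  have "rho ?C < rho (span (insert y ?C))" if y: "y \<in> E" "y \<notin> ?C" for y
  proof (cases "y \<in> F")
    case True
    define A where "A = span (insert y ?C)"
    have sA: "sub A" unfolding A_def using sC y sub_span by auto
    have AF: "A \<subseteq> F" unfolding A_def using sC True sF span_minimal[of "insert y ?C" F] by auto
    have CA: "?C \<subseteq> A" unfolding A_def using span_superset by blast
    have r1: "rho F \<le> rho A + (dim F - dim A)" using rho_le_ext sA sF AF by blast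
    have d1: "dim A = dim ?C + 1" unfolding A_def using dim_ins sC y by blast
    have d2: "dim A \<le> dim F" using dim_mono' sA sF AF by blast
    have r2: "rho ?C + (dim F - dim ?C) = rho F" using cyc_rank[OF sF] by blast
    have "dim F - dim ?C = (dim F - dim A) + 1" using d1 d2 by arith
    then show ?thesis using r1 r2 unfolding A_def by linarith
  next
    case False
    then show ?thesis using flat_incr[OF F sC(1) sC(2)] y by blast
  qed
  then show ?thesis using sC by (simp add: is_flat_def subspaces_of_def ssum_single')
qed

lemma cyc_cyclic: assumes V: "sub V" shows "qcyc scale rho (qcyc scale rho V) = qcyc scale rho V"
proof
  let ?C = "qcyc scale rho V"
  have sC: "sub ?C" "?C \<subseteq> V" using cyc_sub[OF V] by auto
  show "qcyc scale rho ?C \<subseteq> ?C" using cyc_sub[OF sC(1)] by blast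
  show "?C \<subseteq> qcyc scale rho ?C"
  proof
    fix x assume x: "x \<in> ?C"
    have "rho W = rho ?C" if W: "subspace W" "W \<subseteq> ?C" "span (insert x W) = ?C" for W
    proof (rule ccontr)
      assume ne: "rho W \<noteq> rho ?C"
      have sW: "sub W" using W sC by auto
      have rW: "rho W < rho ?C" using ne rho_mono[OF sW sC(1) W(2)] by auto
      obtain T where T: "finite T" "T \<subseteq> V" "span (?C \<union> T) = V" "card T + dim ?C = dim V"
        using extend[OF sC(1) V sC(2)] by blast
      define W' where "W' = span (W \<union> T)"
      have sW': "sub W'" unfolding W'_def using sW T V by (intro sub_span) auto
      have "rho W' \<le> rho W + card T" unfolding W'_def using rho_add_set[OF sW T(1)] T V by auto
      moreover have "rho ?C + (dim V - dim ?C) = rho V" using cyc_rank[OF V] by blast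
      ultimately have r: "rho W' < rho V" using rW T(4) by linarith
      have W'V: "W' \<subseteq> V" unfolding W'_def using W sC T V span_minimal[of "W \<union> T" V] by auto
      have "span (insert x W') = V"
      proof
        show "span (insert x W') \<subseteq> V" using x W'V sC V span_minimal[of "insert x W'" V] by auto
        have "W \<subseteq> W'" "T \<subseteq> W'" unfolding W'_def using span_superset[of "W \<union> T"] by auto
        then have "?C \<subseteq> span (insert x W')" using W(3) span_mono[of "insert x W" "insert x W'"] by auto
        moreover have "T \<subseteq> span (insert x W')" using \<open>T \<subseteq> W'\<close> span_superset by blast
        ultimately have "?C \<union> T \<subseteq> span (insert x W')" by blast
        then show "V \<subseteq> span (insert x W')" using T(3) span_minimal[of "?C \<union> T" "span (insert x W')"] by auto
      qed
      then have "rho W' = rho V" using x cyc_mem sW' W'V by blast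
      then show False using r by simp
    qed
    then show "x \<in> qcyc scale rho ?C" using x cyc_mem by blast
  qed
qed

lemma cyclic_sub_cyc: assumes Z: "sub Z" "qcyc scale rho Z = Z" and V: "sub V" and ZV: "Z \<subseteq> V"
  shows "Z \<subseteq> qcyc scale rho V"
proof
  fix x assume x: "x \<in> Z"
  have "rho W = rho V" if W: "subspace W" "W \<subseteq> V" "span (insert x W) = V" for W
  proof (rule ccontr)
    assume ne: "rho W \<noteq> rho V"
    have sW: "sub W" using W V by auto
    have rW: "rho W < rho V" using ne rho_mono[OF sW V W(2)] by auto
    have "span (insert x (Z \<inter> W)) = Z" using modular[OF W(1) _ _ x] Z ZV W by auto
    moreover have "x \<in> qcyc scale rho Z" using x Z by simp
    ultimately have rZ: "rho (Z \<inter> W) = rho Z" using cyc_mem[of x Z] W Z by (meson inf_le1 subspace_inter)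
    have "span (Z \<union> W) = V"
    proof
      show "span (Z \<union> W) \<subseteq> V" using Z ZV W V span_minimal[of "Z \<union> W" V] by auto
      show "V \<subseteq> span (Z \<union> W)" using W(3) x span_mono[of "insert x W" "Z \<union> W"] by auto
    qed
    then have "rho V + rho (Z \<inter> W) \<le> rho Z + rho W" using rho_submod[OF Z(1) sW] by simp
    then show False using rZ rW by linarith
  qed
  then show "x \<in> qcyc scale rho V" using x ZV cyc_mem by blast
qed

lemma helper_join: assumes Z: "sub Z" "qcyc scale rho Z = Z" and J: "sub J" and ZJ: "Z \<subseteq> J"
  and W: "subspace W" "W \<subseteq> J" "span (insert x W) = J" and z: "z \<in> Z" "z \<notin> W"
  shows "rho J \<le> rho W"
proof -
  have sW: "sub W" using W J by auto
  have zJ: "span (insert z W) = J" using exchange[OF W(1), of z x] W z ZJ by auto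
  have "span (insert z (Z \<inter> W)) = Z" using modular[OF W(1) _ _ z(1)] Z ZJ zJ by auto
  moreover have "z \<in> qcyc scale rho Z" using z Z by simp
  ultimately have rZ: "rho (Z \<inter> W) = rho Z" using cyc_mem[of z Z] W Z by (meson inf_le1 subspace_inter)
  have "span (Z \<union> W) = J"
  proof
    show "span (Z \<union> W) \<subseteq> J" using Z ZJ W J span_minimal[of "Z \<union> W" J] by auto
    show "J \<subseteq> span (Z \<union> W)" using zJ z span_mono[of "insert z W" "Z \<union> W"] by auto
  qed
  then have "rho J + rho (Z \<inter> W) \<le> rho Z + rho W" using rho_submod[OF Z(1) sW] by simp
  then show ?thesis using rZ by linarith
qed

lemma cl_sum_cyclic: assumes Z1: "sub Z1" "qcyc scale rho Z1 = Z1" and Z2: "sub Z2" "qcyc scale rho Z2 = Z2"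
  shows "qcyc scale rho (qcl scale E rho (span (Z1 \<union> Z2))) = qcl scale E rho (span (Z1 \<union> Z2))"
proof
  let ?V = "span (Z1 \<union> Z2)"
  let ?J = "qcl scale E rho ?V"
  have sV: "sub ?V" using Z1 Z2 sub_span by auto
  have sJ: "sub ?J" using cl_sub by blast
  have VJ: "?V \<subseteq> ?J" using V_cl[OF sV] .
  have ZJ: "Z1 \<subseteq> ?J" "Z2 \<subseteq> ?J" using VJ span_superset[of "Z1 \<union> Z2"] by auto
  have rJ: "rho ?J = rho ?V" using rho_cl[OF sV] .
  show "qcyc scale rho ?J \<subseteq> ?J" using cyc_sub[OF sJ] by blast
  show "?J \<subseteq> qcyc scale rho ?J"
  proof
    fix x assume x: "x \<in> ?J"
    have "rho W = rho ?J" if W: "subspace W" "W \<subseteq> ?J" "span (insert x W) = ?J" for W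
    proof -
      have sW: "sub W" using W sJ by auto
      have le: "rho W \<le> rho ?J" using rho_mono[OF sW sJ W(2)] .
      show ?thesis
      proof (cases "Z1 \<union> Z2 \<subseteq> W")
        case True
        then have "?V \<subseteq> W" using span_minimal W by blast
        then have "rho ?V \<le> rho W" using rho_mono[OF sV sW] by blast
        then show ?thesis using le rJ by linarith
      next
        case False
        then obtain z where z: "z \<in> Z1 \<or> z \<in> Z2" "z \<notin> W" by blast
        then have "rho ?J \<le> rho W"
          using helper_join[OF Z1 sJ ZJ(1) W, of z] helper_join[OF Z2 sJ ZJ(2) W, of z] by blast
        then show ?thesis using le by linarith
      qed
    qed
    then show "x \<in> qcyc scale rho ?J" using x cyc_mem by blast
  qed
qed

lemma int_flat: assumes F1: "is_flat scale E rho Z1" and F2: "is_flat scale E rho Z2"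
  shows "is_flat scale E rho (Z1 \<inter> Z2)"
proof -
  have s: "sub Z1" "sub Z2" using F1 F2 flat_sub by auto
  have sI: "sub (Z1 \<inter> Z2)" using sub_Int s by blast
  have "rho (Z1 \<inter> Z2) < rho (span (insert y (Z1 \<inter> Z2)))" if y: "y \<in> E" "y \<notin> Z1 \<inter> Z2" for y
  proof (cases "y \<in> Z1")
    case True
    then have "y \<notin> Z2" using y by blast
    then show ?thesis using flat_incr[OF F2 sI] y by blast
  next
    case False
    then show ?thesis using flat_incr[OF F1 sI] y by blast
  qed
  then show ?thesis using sI by (simp add: is_flat_def subspaces_of_def ssum_single')
qed

end

context qm begin

lemma main: assumes Z1: "Z1 \<in> cyclic_flats scale E rho" and Z2: "Z2 \<in> cyclic_flats scale E rho"
  shows "(let Zm = qcyc scale rho (Z1 \<inter> Z2); Zj = qcl scale E rho (ssum scale Z1 Z2);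
         d = int (vector_space.dim scale (Z1 \<inter> Z2)) - int (vector_space.dim scale Zm) in
     Zm \<in> cyclic_flats scale E rho \<and> Zm \<subseteq> Z1 \<and> Zm \<subseteq> Z2 \<and>
     (\<forall>Z\<in>cyclic_flats scale E rho. Z \<subseteq> Z1 \<and> Z \<subseteq> Z2 \<longrightarrow> Z \<subseteq> Zm) \<and>
     Zj \<in> cyclic_flats scale E rho \<and> Z1 \<subseteq> Zj \<and> Z2 \<subseteq> Zj \<and>
     (\<forall>Z\<in>cyclic_flats scale E rho. Z1 \<subseteq> Z \<and> Z2 \<subseteq> Z \<longrightarrow> Zj \<subseteq> Z) \<and>
     int (rho Zm) = int (rho (Z1 \<inter> Z2)) - d \<and>
     rho Zj = rho (ssum scale Z1 Z2) \<and>
     int (rho Z1) + int (rho Z2) \<ge> int (rho Zj) + int (rho Zm) + d)"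
proof -
  have F1: "is_flat scale E rho Z1" and C1: "qcyc scale rho Z1 = Z1"
    using Z1 by (auto simp: cyclic_flats_def is_cyclic_def)
  have F2: "is_flat scale E rho Z2" and C2: "qcyc scale rho Z2 = Z2"
    using Z2 by (auto simp: cyclic_flats_def is_cyclic_def)
  have s1: "sub Z1" and s2: "sub Z2" using F1 F2 flat_sub by auto
  define I where "I = Z1 \<inter> Z2"
  define Zm where "Zm = qcyc scale rho I"
  define V where "V = span (Z1 \<union> Z2)"
  define Zj where "Zj = qcl scale E rho V"
  have sI: "sub I" unfolding I_def using sub_Int s1 s2 by blast
  have FI: "is_flat scale E rho I" unfolding I_def using int_flat F1 F2 by blast
  have sV: "sub V" unfolding V_def using s1 s2 sub_span by auto
  have Zm_cf: "Zm \<in> cyclic_flats scale E rho"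
    unfolding Zm_def cyclic_flats_def is_cyclic_def using cyc_flat[OF FI] cyc_cyclic[OF sI] by simp
  have ZmI: "Zm \<subseteq> I" unfolding Zm_def using cyc_sub[OF sI] by blast
  have Zm_gr: "\<forall>Z\<in>cyclic_flats scale E rho. Z \<subseteq> Z1 \<and> Z \<subseteq> Z2 \<longrightarrow> Z \<subseteq> Zm"
  proof (intro ballI impI)
    fix Z assume Z: "Z \<in> cyclic_flats scale E rho" "Z \<subseteq> Z1 \<and> Z \<subseteq> Z2"
    have "sub Z" "qcyc scale rho Z = Z" using Z flat_sub by (auto simp: cyclic_flats_def is_cyclic_def)
    then show "Z \<subseteq> Zm" unfolding Zm_def using cyclic_sub_cyc sI Z I_def by auto
  qed
  have Zj_cf: "Zj \<in> cyclic_flats scale E rho"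
    unfolding Zj_def cyclic_flats_def is_cyclic_def V_def
    using cl_flat[OF sV] cl_sum_cyclic[OF s1 C1 s2 C2] V_def by simp
  have VZj: "V \<subseteq> Zj" unfolding Zj_def using V_cl[OF sV] .
  have ZZj: "Z1 \<subseteq> Zj" "Z2 \<subseteq> Zj" using VZj span_superset[of "Z1 \<union> Z2"] V_def by auto
  have Zj_le: "\<forall>Z\<in>cyclic_flats scale E rho. Z1 \<subseteq> Z \<and> Z2 \<subseteq> Z \<longrightarrow> Zj \<subseteq> Z"
  proof (intro ballI impI)
    fix Z assume Z: "Z \<in> cyclic_flats scale E rho" "Z1 \<subseteq> Z \<and> Z2 \<subseteq> Z"
    have FZ: "is_flat scale E rho Z" using Z by (auto simp: cyclic_flats_def)
    have "V \<subseteq> Z" unfolding V_def using Z flat_sub[OF FZ] span_minimal[of "Z1 \<union> Z2" Z] by auto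
    then show "Zj \<subseteq> Z" unfolding Zj_def using cl_least[OF sV FZ] by blast
  qed
  have rk: "rho Zm + (dim I - dim Zm) = rho I" "dim Zm \<le> dim I"
    unfolding Zm_def using cyc_rank[OF sI] by auto
  have rm: "int (rho Zm) = int (rho I) - (int (dim I) - int (dim Zm))" using rk by linarith
  have rj: "rho Zj = rho V" unfolding Zj_def using rho_cl[OF sV] .
  have sm: "rho V + rho I \<le> rho Z1 + rho Z2" unfolding V_def I_def using rho_submod[OF s1 s2] .
  have ZmZ: "Zm \<subseteq> Z1" "Zm \<subseteq> Z2" using ZmI I_def by auto
  have ineq: "int (rho Z1) + int (rho Z2) \<ge> int (rho Zj) + int (rho Zm) + (int (dim I) - int (dim Zm))"
    using rm rj sm by linarith
  have goal: "Zm \<in> cyclic_flats scale E rho \<and> Zm \<subseteq> Z1 \<and> Zm \<subseteq> Z2 \<and>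
     (\<forall>Z\<in>cyclic_flats scale E rho. Z \<subseteq> Z1 \<and> Z \<subseteq> Z2 \<longrightarrow> Z \<subseteq> Zm) \<and>
     Zj \<in> cyclic_flats scale E rho \<and> Z1 \<subseteq> Zj \<and> Z2 \<subseteq> Zj \<and>
     (\<forall>Z\<in>cyclic_flats scale E rho. Z1 \<subseteq> Z \<and> Z2 \<subseteq> Z \<longrightarrow> Zj \<subseteq> Z) \<and>
     int (rho Zm) = int (rho I) - (int (dim I) - int (dim Zm)) \<and>
     rho Zj = rho V \<and>
     int (rho Z1) + int (rho Z2) \<ge> int (rho Zj) + int (rho Zm) + (int (dim I) - int (dim Zm))"
    using Zm_cf ZmZ Zm_gr Zj_cf ZZj Zj_le rm rj ineq by blast
  show ?thesis
    unfolding Let_def ssum_def I_def[symmetric] Zm_def[symmetric] V_def[symmetric] Zj_def[symmetric]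
    by (rule goal)
qed

end

lemma qm_intro: "qmatroid scale E rho \<Longrightarrow> qm scale E rho"
  unfolding qm_def qm_axioms_def qmatroid_def by auto

theorem corollary4p2:
  fixes scale :: "'f::field \<Rightarrow> 'v::ab_group_add \<Rightarrow> 'v"
    and E :: "'v set" and rho :: "'v set \<Rightarrow> nat"
  assumes M: "qmatroid scale E rho"
  shows "\<forall>Z1\<in>cyclic_flats scale E rho. \<forall>Z2\<in>cyclic_flats scale E rho.
    (let Zm = qcyc scale rho (Z1 \<inter> Z2); Zj = qcl scale E rho (ssum scale Z1 Z2);
         d = int (vector_space.dim scale (Z1 \<inter> Z2)) - int (vector_space.dim scale Zm) in
     Zm \<in> cyclic_flats scale E rho \<and> Zm \<subseteq> Z1 \<and> Zm \<subseteq> Z2 \<and>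
     (\<forall>Z\<in>cyclic_flats scale E rho. Z \<subseteq> Z1 \<and> Z \<subseteq> Z2 \<longrightarrow> Z \<subseteq> Zm) \<and>
     Zj \<in> cyclic_flats scale E rho \<and> Z1 \<subseteq> Zj \<and> Z2 \<subseteq> Zj \<and>
     (\<forall>Z\<in>cyclic_flats scale E rho. Z1 \<subseteq> Z \<and> Z2 \<subseteq> Z \<longrightarrow> Zj \<subseteq> Z) \<and>
     int (rho Zm) = int (rho (Z1 \<inter> Z2)) - d \<and>
     rho Zj = rho (ssum scale Z1 Z2) \<and>
     int (rho Z1) + int (rho Z2) \<ge> int (rho Zj) + int (rho Zm) + d)"
  using qm.main[OF qm_intro[OF M]] by blast


end
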